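(* Fix a constant $c\ge1$. There is a constant $c'>0$ depending only on $c$ such that the following holds for all integers $n\ge3$ and $U\ge3$ with $n/c\le U\le cn$. Run the modified chain started at state $a$ at time $1$, and consider its $4n-1$ transitions at times $1,\dots,4n-1$. For a state $j$, let $T(a,j)$ be the event that during these transitions (1) no major self-loop is taken at any of the states $1,1',n,n'$, and (2) exactly one switching link is taken, and it is taken at state $j$. Let $L_k$ be the event that exactly $k$ major self-loops (at any states) are taken during these transitions. Then for all states $a,j$ and all integers $0\le k\le 2n-2$, $$\mathbb{P}\big(T(a,j)\mid L_k\big)\ge\frac{1}{c'n}.$$
   Context: Let $n\ge3$, $U\ge3$ be integers. The "modified chain" is a Markov chain on the $2n$ states $\{1,\dots,n,1',\dots,n'\}$ whose transitions are labeled edges (a multigraph; two distinct edges may join the same pair of states). Every state has exactly three outgoing edges: a "major self-loop" (back to itself) with probability $1/2$, a "continuing link" with probability $\frac12(1-\frac1U)$, and a "switching link" with probability $\frac1{2U}$. Continuing links: $i\to i+1$ for $1\le i\le n-1$, $n\to n'$, $i'\to(i-1)'$ for $2\le i\le n$, $1'\to1$. Switching links: $i\to(i+1)'$ for $1\le i\le n-1$, $n\to n$, $i'\to i-1$ for $2\le i\le n$, $1'\to1'$ (so at $n$ and $1'$ the switching link is a self-loop distinct from the major self-loop). (This chain is obtained from the original chain—in which states $2,\dots,n-1,2',\dots,(n-1)'$ have these same three transitions, while states $1,1',n,n'$ have no major self-loop and have continuing and switching probabilities $1-\frac1U$ and $\frac1U$—by adding a major self-loop of probability $1/2$ at $1,1',n,n'$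 and halving their other transition probabilities.) *)

theory Defs
  imports Complex_Main
begin

text \<open>States of the modified chain: (i, False) is state i, (i, True) is state i',
  for 1 <= i <= n.\<close>
type_synonym mstate = "nat \<times> bool"

definition mstates :: "nat \<Rightarrow> mstate set" where
  "mstates n = {(i, b). 1 \<le> i \<and> i \<le> n}"

datatype medge = Major | Cont | Switch

fun mstep :: "nat \<Rightarrow> mstate \<Rightarrow> medge \<Rightarrow> mstate" where
  "mstep n s Major = s"
| "mstep n (i, False) Cont = (if i < n then (i + 1, False) else (n, True))"
| "mstep n (i, True) Cont = (if 2 \<le> i then (i - 1, True) else (1, False))"
| "mstep n (i, False) Switch = (if i < n then (i + 1, True) else (n, False))"
| "mstep n (i, True) Switch = (if 2 \<le> i then (i - 1, False) else (1, True))"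

definition medge_prob :: "nat \<Rightarrow> medge \<Rightarrow> real" where
  "medge_prob U e = (case e of Major \<Rightarrow> 1/2
                              | Cont \<Rightarrow> (1 - 1 / real U) / 2
                              | Switch \<Rightarrow> 1 / (2 * real U))"

fun mrun :: "nat \<Rightarrow> mstate \<Rightarrow> medge list \<Rightarrow> mstate list" where
  "mrun n s [] = []"
| "mrun n s (e # es) = s # mrun n (mstep n s e) es"

definition mtrans :: "nat \<Rightarrow> mstate \<Rightarrow> medge list \<Rightarrow> (mstate \<times> medge) list" where
  "mtrans n s es = zip (mrun n s es) es"

definition mweight :: "nat \<Rightarrow> medge list \<Rightarrow> real" where
  "mweight U es = prod_list (map (medge_prob U) es)"

text \<open>Probability that the chain, run for m transitions, has edge sequence in
  the event E (events are sets of edge sequences, the start state being fixed).\<close>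
definition mprob :: "nat \<Rightarrow> nat \<Rightarrow> (medge list \<Rightarrow> bool) \<Rightarrow> real" where
  "mprob U m E = (\<Sum>es\<in>{es. length es = m \<and> E es}. mweight U es)"

definition mcond_prob :: "nat \<Rightarrow> nat \<Rightarrow> (medge list \<Rightarrow> bool) \<Rightarrow> (medge list \<Rightarrow> bool) \<Rightarrow> real" where
  "mcond_prob U m A B = mprob U m (\<lambda>es. A es \<and> B es) / mprob U m B"

definition eventT :: "nat \<Rightarrow> mstate \<Rightarrow> mstate \<Rightarrow> medge list \<Rightarrow> bool" where
  "eventT n a j es =
     ((\<forall>(s, e) \<in> set (mtrans n a es).
         e = Major \<longrightarrow> s \<notin> {(1, False), (1, True), (n, False), (n, True)})
      \<and> filter (\<lambda>(s, e). e = Switch) (mtrans n a es) = [(j, Switch)])"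

definition eventL :: "nat \<Rightarrow> medge list \<Rightarrow> bool" where
  "eventL k es = (length (filter (\<lambda>e. e = Major) es) = k)"

end

theory Submission
  imports Defs
begin


lemma UNIV_medge: "(UNIV::medge set) = {Major, Cont, Switch}"
  using medge.exhaust by auto

lemma finite_ev: "finite {es::medge list. length es = m \<and> E es}"
proof -
  have "{es::medge list. length es = m \<and> E es} \<subseteq> {xs. set xs \<subseteq> UNIV \<and> length xs = m}" by auto
  moreover have "finite {xs::medge list. set xs \<subseteq> UNIV \<and> length xs = m}"
    by (rule finite_lists_length_eq) (simp add: UNIV_medge)
  ultimately show ?thesis by (rule finite_subset)
qed

lemma sum_lists_Suc:
  "(\<Sum>es\<in>{es::medge list. length es = Suc m \<and> E es}. f es) =
   (\<Sum>e\<in>UNIV. \<Sum>es\<in>{es. length es = m \<and> E (e#es)}. f (e#es))"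
proof -
  have eq: "{es::medge list. length es = Suc m \<and> E es} =
    (\<lambda>(e,es). e#es) ` (SIGMA e:UNIV. {es. length es = m \<and> E (e#es)})"
    by (auto simp: length_Suc_conv image_iff)
  have inj: "inj_on (\<lambda>(e,es). e#es) (SIGMA e:UNIV. {es::medge list. length es = m \<and> E (e#es)})"
    by (auto simp: inj_on_def)
  show ?thesis
    unfolding eq sum.reindex[OF inj]
    by (subst sum.Sigma) (auto simp: finite_ev UNIV_medge split_def)
qed

lemma mweight_Cons: "mweight U (e#es) = medge_prob U e * mweight U es"
  by (simp add: mweight_def)

lemma mprob_L: "mprob U m (eventL k) = real (m choose k) / 2^m"
proof (induction m arbitrary: k)
  case 0
  have "{es::medge list. length es = 0 \<and> eventL k es} = (if k = 0 then {[]} else {})"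
    by (auto simp: eventL_def)
  then show ?case by (simp add: mprob_def mweight_def)
next
  case (Suc m)
  have "mprob U (Suc m) (eventL k) =
     (\<Sum>e\<in>UNIV. medge_prob U e * (\<Sum>es\<in>{es. length es = m \<and> eventL k (e#es)}. mweight U es))"
    unfolding mprob_def sum_lists_Suc mweight_Cons by (simp add: sum_distrib_left)
  also have "\<dots> = medge_prob U Major * (if k = 0 then 0 else mprob U m (eventL (k - 1)))
      + (medge_prob U Cont + medge_prob U Switch) * mprob U m (eventL k)"
    by (cases k) (simp_all add: UNIV_medge eventL_def mprob_def algebra_simps)
  also have "\<dots> = real (Suc m choose k) / 2 ^ Suc m"
  proof -
    have c: "medge_prob U Cont + medge_prob U Switch = 1/2"
      by (cases "U=0") (simp_all add: medge_prob_def field_simps)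
    have mj: "medge_prob U Major = 1/2" by (simp add: medge_prob_def)
    show ?thesis
    proof (cases k)
      case 0 then show ?thesis using Suc.IH[of 0] by (simp add: c mj)
    next
      case (Suc k')
      then show ?thesis using Suc.IH[of k'] Suc.IH[of "Suc k'"] by (simp add: c mj field_simps)
    qed
  qed
  finally show ?case .
qed




fun build :: "medge list \<Rightarrow> nat list \<Rightarrow> medge list" where
  "build w [] = []"
| "build [] (c#cs) = replicate c Major"
| "build (x#w) (c#cs) = replicate c Major @ x # build w cs"

fun endst :: "nat \<Rightarrow> mstate \<Rightarrow> medge list \<Rightarrow> mstate" where
  "endst n s [] = s"
| "endst n s (e#es) = endst n (mstep n s e) es"

lemma mtrans_Nil[simp]: "mtrans n s [] = []" by (simp add: mtrans_def)
lemma mtrans_Cons[simp]: "mtrans n s (e#es) = (s,e) # mtrans n (mstep n s e) es"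
  by (simp add: mtrans_def)

lemma mtrans_rep: "mtrans n s (replicate c Major @ es) = replicate c (s,Major) @ mtrans n s es"
  by (induction c) auto

lemma build_length: "length cs = Suc (length w) \<Longrightarrow> length (build w cs) = length w + sum_list cs"
  by (induction w cs rule: build.induct) auto

lemma build_major: "length cs = Suc (length w) \<Longrightarrow> Major \<notin> set w \<Longrightarrow>
   length (filter (\<lambda>e. e = Major) (build w cs)) = sum_list cs"
  by (induction w cs rule: build.induct) auto

lemma build_weight: "length cs = Suc (length w) \<Longrightarrow>
   mweight U (build w cs) = (1/2)^(sum_list cs) * mweight U w"
  by (induction w cs rule: build.induct) (auto simp: mweight_def medge_prob_def power_add)

lemma build_switch: "length cs = Suc (length w) \<Longrightarrow>
   filter (\<lambda>(s,e). e = Switch) (mtrans n s (build w cs)) = filter (\<lambda>(s,e). e = Switch) (mtrans n s w)"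
proof (induction w cs arbitrary: s rule: build.induct)
  case (2 c cs) then show ?case by (induction c) auto
next
  case (3 x w c cs) then show ?case by (simp add: mtrans_rep)
qed auto

lemma build_majors: "length cs = Suc (length w) \<Longrightarrow>
   (st, Major) \<in> set (mtrans n s (build w cs)) \<Longrightarrow> Major \<notin> set w \<Longrightarrow>
   \<exists>t<length cs. cs!t > 0 \<and> st = endst n s (take t w)"
proof (induction w cs arbitrary: s rule: build.induct)
  case (2 c cs)
  then have "(st,Major) \<in> set (replicate c (s,Major))" using mtrans_rep[of n s c "[]"] by simp
  then have "st = s \<and> c > 0" by (cases c) auto
  then show ?case by (intro exI[of _ 0]) auto
next
  case (3 x w c cs)
  from "3.prems" have "(st, Major) \<in> set (replicate c (s,Major)) \<or>
     (st, Major) \<in> set (mtrans n (mstep n s x) (build w cs))"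
    by (auto simp: mtrans_rep)
  then show ?case
  proof
    assume "(st, Major) \<in> set (replicate c (s,Major))"
    then show ?thesis by (intro exI[of _ 0]) auto
  next
    assume "(st, Major) \<in> set (mtrans n (mstep n s x) (build w cs))"
    with "3.IH"[of "mstep n s x"] "3.prems" obtain t where "t < length cs" "cs!t > 0" "st = endst n (mstep n s x) (take t w)"
      by auto
    then show ?thesis by (intro exI[of _ "Suc t"]) auto
  qed
qed auto

lemma rep_eq: "x \<noteq> Major \<Longrightarrow> x' \<noteq> Major \<Longrightarrow>
  replicate c Major @ x # r = replicate c' Major @ x' # r' \<Longrightarrow> c = c' \<and> x = x' \<and> r = r'"
proof (induction c arbitrary: c')
  case 0 then show ?case by (cases c') auto
next
  case (Suc c) then show ?case by (cases c') auto
qed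

lemma build_inj: "length cs = Suc (length w) \<Longrightarrow> length cs' = Suc (length w) \<Longrightarrow> Major \<notin> set w \<Longrightarrow>
   build w cs = build w cs' \<Longrightarrow> cs = cs'"
proof (induction w cs arbitrary: cs' rule: build.induct)
  case (2 c cs)
  then obtain c' where "cs' = [c']" by (cases cs') auto
  with 2 show ?case by simp
next
  case (3 x w c cs)
  then obtain c' cs'' where cs': "cs' = c' # cs''" by (cases cs') auto
  with 3 have "c = c' \<and> build w cs = build w cs''"
    using rep_eq[of x x c "build w cs" c' "build w cs''"] by auto
  with 3 cs' show ?case by auto
qed auto




definition comps :: "bool list \<Rightarrow> nat \<Rightarrow> nat list set" where
  "comps bs k = {cs. length cs = length bs \<and> sum_list cs = k \<and> list_all2 (\<lambda>c b. c > 0 \<longrightarrow> b) cs bs}"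

lemma comps_finite: "finite (comps bs k)"
proof -
  have "comps bs k \<subseteq> {cs. set cs \<subseteq> {..k} \<and> length cs = length bs}"
    by (auto simp: comps_def dest: member_le_sum_list)
  then show ?thesis by (rule finite_subset) (simp add: finite_lists_length_eq)
qed

lemma comps_Nil: "comps [] k = (if k = 0 then {[]} else {})"
  by (auto simp: comps_def)

lemma comps_False: "comps (False#bs) k = Cons 0 ` comps bs k"
  by (auto simp: comps_def list_all2_Cons2 image_iff)

lemma comps_True: "comps (True#bs) k = (\<Union>c\<in>{..k}. Cons c ` comps bs (k - c))"
  by (auto simp: comps_def list_all2_Cons2 image_iff)

lemma sum_rev_atMost: "(\<Sum>c\<le>k. f (k - c)) = (\<Sum>i\<le>(k::nat). (f i :: nat))"
  by (rule sum.reindex_bij_witness[where i="\<lambda>i. k - i" and j="\<lambda>i. k - i"]) auto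

lemma comps_card: "card (comps bs k) =
   (if length (filter (\<lambda>x. x) bs) = 0 then (if k = 0 then 1 else 0)
    else (k + length (filter (\<lambda>x. x) bs) - 1) choose k)"
proof (induction bs arbitrary: k)
  case Nil then show ?case by (simp add: comps_Nil)
next
  case (Cons b bs)
  show ?case
  proof (cases b)
    case False
    then show ?thesis using Cons by (simp add: comps_False card_image)
  next
    case True
    define a where "a = length (filter (\<lambda>x. x) bs)"
    have "card (comps (True#bs) k) = (\<Sum>c\<le>k. card (Cons c ` comps bs (k - c)))"
      unfolding comps_True
      by (rule card_UN_disjoint) (auto simp: comps_finite)
    also have "\<dots> = (\<Sum>c\<le>k. card (comps bs (k - c)))"
      by (simp add: card_image)
    also have "\<dots> = (\<Sum>i\<le>k. card (comps bs i))"
      by (rule sum_rev_atMost)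
    also have "\<dots> = (k + a) choose k"
    proof (cases "a = 0")
      case True
      then have "(\<Sum>i\<le>k. card (comps bs i)) = (\<Sum>i\<le>k. if i = 0 then 1 else 0)"
        using Cons.IH a_def by simp
      also have "\<dots> = 1" by (simp add: sum.delta)
      finally show ?thesis using True by simp
    next
      case False
      then have "(\<Sum>i\<le>k. card (comps bs i)) = (\<Sum>i\<le>k. ((a - 1) + i) choose i)"
      proof (intro sum.cong refl)
        fix i
        have ne: "filter (\<lambda>x. x) bs \<noteq> []" using False a_def by auto
        have "card (comps bs i) = i + a - 1 choose i" using Cons.IH[of i] ne a_def by simp
        also have "i + a - 1 = a - 1 + i" using False by simp
        finally show "card (comps bs i) = (a - 1 + i) choose i" .
      qed
      also have "\<dots> = Suc (a - 1 + k) choose k" by (rule sum_choose_lower)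
      finally show ?thesis using False by (simp add: add.commute)
    qed
    finally show ?thesis using True a_def by simp
  qed
qed




lemma choose_step: "M \<ge> 1 \<Longrightarrow> M * ((k + M) choose k) = (k + M) * ((k + M - 1) choose k)"
  using binomial_absorb_comp[of "k+M" k] by (simp add: mult.commute)

lemma choose_ratio: "A \<ge> 1 \<Longrightarrow> k \<le> 3*A \<Longrightarrow> ((k + A - 1 + d) choose k) \<le> 4^d * ((k + A - 1) choose k)"
proof (induction d)
  case 0 then show ?case by simp
next
  case (Suc d)
  define M where "M = A + d"
  have M1: "M \<ge> 1" using Suc by (simp add: M_def)
  have e1: "k + A - 1 + Suc d = k + M" and e2: "k + A - 1 + d = k + M - 1" using Suc by (auto simp: M_def)
  have "M * ((k + M) choose k) = (k + M) * ((k + M - 1) choose k)" by (rule choose_step[OF M1])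
  also have "\<dots> \<le> (4 * M) * ((k + M - 1) choose k)" using Suc by (intro mult_right_mono) (auto simp: M_def)
  also have "\<dots> \<le> (4 * M) * (4^d * ((k + A - 1) choose k))" using Suc.IH Suc.prems e2 by (intro mult_left_mono) auto
  finally have "M * ((k + M) choose k) \<le> M * (4^Suc d * ((k + A - 1) choose k))" by (simp add: algebra_simps)
  then have "(k + M) choose k \<le> 4^Suc d * ((k + A - 1) choose k)" using M1 by simp
  then show ?case using e1 by simp
qed

definition posn :: "nat \<Rightarrow> mstate \<Rightarrow> nat" where
  "posn n x = (if snd x then 2*n - fst x else fst x - 1)"

definition bad :: "nat \<Rightarrow> mstate set" where
  "bad n = {(1,False),(1,True),(n,False),(n,True)}"

lemma posn_lt: "x \<in> mstates n \<Longrightarrow> posn n x < 2*n"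
  by (auto simp: mstates_def posn_def)

lemma posn_inj: "inj_on (posn n) (mstates n)"
  by (auto simp: inj_on_def mstates_def posn_def split: if_splits)

lemma cont_step: "x \<in> mstates n \<Longrightarrow> mstep n x Cont \<in> mstates n \<and> posn n (mstep n x Cont) = Suc (posn n x) mod (2*n)"
proof -
  assume x: "x \<in> mstates n"
  obtain i b where xi: "x = (i,b)" by (cases x)
  show ?thesis
  proof (cases b)
    case True
    show ?thesis
    proof (cases "2 \<le> i")
      case True then show ?thesis using x xi \<open>b\<close> by (auto simp: mstates_def posn_def)
    next
      case False
      then have "i = 1" "n \<ge> 1" using x xi by (auto simp: mstates_def)
      then show ?thesis using xi \<open>b\<close> by (auto simp: mstates_def posn_def)
    qed
  next
    case False
    then show ?thesis using x xi by (auto simp: mstates_def posn_def)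
  qed
qed

lemma switch_step: "x \<in> mstates n \<Longrightarrow> mstep n x Switch \<in> mstates n"
proof -
  assume x: "x \<in> mstates n"
  obtain i b where xi: "x = (i,b)" by (cases x)
  show ?thesis using x unfolding xi by (cases b) (auto simp: mstates_def)
qed

lemma endst_append: "endst n s (xs @ ys) = endst n (endst n s xs) ys"
  by (induction xs arbitrary: s) auto

lemma endst_rep: "x \<in> mstates n \<Longrightarrow> endst n x (replicate t Cont) \<in> mstates n \<and>
   posn n (endst n x (replicate t Cont)) = (posn n x + t) mod (2*n)"
proof (induction t)
  case 0 then show ?case using posn_lt by simp
next
  case (Suc t)
  have "replicate (Suc t) Cont = replicate t Cont @ [Cont]" by (simp add: replicate_append_same)
  then have "endst n x (replicate (Suc t) Cont) = mstep n (endst n x (replicate t Cont)) Cont"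
    by (simp add: endst_append)
  then show ?case using Suc cont_step[of "endst n x (replicate t Cont)" n] by (simp add: mod_Suc_eq)
qed

lemma endst_rep_period: "x \<in> mstates n \<Longrightarrow> endst n x (replicate (2*n + t) Cont) = endst n x (replicate t Cont)"
proof -
  assume x: "x \<in> mstates n"
  have a: "endst n x (replicate (2*n + t) Cont) \<in> mstates n"
    "posn n (endst n x (replicate (2*n + t) Cont)) = (posn n x + (2*n + t)) mod (2*n)"
    using endst_rep[OF x, of "2*n+t"] by auto
  have b: "endst n x (replicate t Cont) \<in> mstates n"
    "posn n (endst n x (replicate t Cont)) = (posn n x + t) mod (2*n)"
    using endst_rep[OF x, of t] by auto
  have e: "posn n x + (2*n + t) = (posn n x + t) + 2*n" by simp
  have "(posn n x + (2*n + t)) mod (2*n) = (posn n x + t) mod (2*n)"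
    unfolding e by (rule mod_add_self2)
  then show ?thesis using a b inj_onD[OF posn_inj] by metis
qed

lemma three_good: "x \<in> mstates n \<Longrightarrow> n \<ge> 3 \<Longrightarrow> \<exists>d<3. endst n x (replicate d Cont) \<notin> bad n"
proof -
  assume x: "x \<in> mstates n" and n: "n \<ge> 3"
  obtain i b where xi: "x = (i,b)" by (cases x)
  have r2: "replicate 2 Cont = [Cont, Cont]" by (simp add: numeral_2_eq_2)
  have r1: "replicate 1 Cont = [Cont]" by simp
  show ?thesis
  proof (cases "x \<in> bad n")
    case False then show ?thesis by (intro exI[of _ 0]) auto
  next
    case True
    then have "x = (1,False) \<or> x = (1,True) \<or> x = (n,False) \<or> x = (n,True)" by (auto simp: bad_def)
    then show ?thesis
    proof (elim disjE)
      assume "x = (1,False)" then show ?thesis using n by (intro exI[of _ 1]) (auto simp: bad_def)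
    next
      assume "x = (1,True)" then show ?thesis using n by (intro exI[of _ 2]) (auto simp: bad_def r2)
    next
      assume "x = (n,False)" then show ?thesis using n by (intro exI[of _ 2]) (auto simp: bad_def r2)
    next
      assume "x = (n,True)" then show ?thesis using n by (intro exI[of _ 1]) (auto simp: bad_def)
    qed
  qed
qed

lemma bad_count: "x \<in> mstates n \<Longrightarrow> L \<le> 2*n \<Longrightarrow>
   card {t. t < L \<and> endst n x (replicate t Cont) \<in> bad n} \<le> 4"
proof -
  assume x: "x \<in> mstates n" and L: "L \<le> 2*n"
  let ?f = "\<lambda>t. endst n x (replicate t Cont)"
  have key: "s = t" if "s < L" "t < L" "(posn n x + s) mod (2*n) = (posn n x + t) mod (2*n)" "s \<le> t" for s t
  proof (rule ccontr)
    assume "s \<noteq> t"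
    then have "0 < t - s" "t - s < 2*n" using that L by auto
    moreover have "2*n dvd (posn n x + t) - (posn n x + s)"
      using that(3) mod_eq_dvd_iff_nat[of "posn n x + s" "posn n x + t" "2*n"] that(4) by auto
    ultimately show False using nat_dvd_not_less by auto
  qed
  have inj: "inj_on ?f {t. t < L \<and> ?f t \<in> bad n}"
  proof (rule inj_onI)
    fix s t assume s: "s \<in> {t. t < L \<and> ?f t \<in> bad n}" and t: "t \<in> {t. t < L \<and> ?f t \<in> bad n}" and e: "?f s = ?f t"
    then have m: "(posn n x + s) mod (2*n) = (posn n x + t) mod (2*n)"
      using endst_rep[OF x, of s] endst_rep[OF x, of t] by metis
    show "s = t"
    proof (cases "s \<le> t")
      case True then show ?thesis using key[of s t] s t m by auto
    next
      case False then show ?thesis using key[of t s] s t m by auto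
    qed
  qed
  have "card {t. t < L \<and> ?f t \<in> bad n} = card (?f ` {t. t < L \<and> ?f t \<in> bad n})"
    using inj by (simp add: card_image)
  also have "\<dots> \<le> card (bad n)" by (rule card_mono) (auto simp: bad_def)
  also have "\<dots> \<le> 4"
  proof -
    have "bad n = set [(1,False),(1,True),(n,False),(n,True)]" by (simp add: bad_def)
    then show ?thesis using card_length[of "[(1,False),(1,True),(n,False),(n,True)]"] by simp
  qed
  finally show ?thesis .
qed




lemma endst_rep_add: "endst n x (replicate (s + t) Cont) = endst n (endst n x (replicate s Cont)) (replicate t Cont)"
  by (simp add: replicate_add endst_append)

lemma good_count: "x \<in> mstates n \<Longrightarrow> n \<ge> 3 \<Longrightarrow>
   L div 3 \<le> card {t. t < L \<and> endst n x (replicate t Cont) \<notin> bad n}"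
proof -
  assume x: "x \<in> mstates n" and n: "n \<ge> 3"
  let ?G = "\<lambda>t. endst n x (replicate t Cont) \<notin> bad n"
  have ex: "\<exists>d<3. ?G (3*i + d)" for i
  proof -
    have y: "endst n x (replicate (3*i) Cont) \<in> mstates n" using endst_rep[OF x] by blast
    obtain d where "d < 3" "endst n (endst n x (replicate (3*i) Cont)) (replicate d Cont) \<notin> bad n"
      using three_good[OF y n] by blast
    then show ?thesis by (intro exI[of _ d]) (simp add: endst_rep_add)
  qed
  define g where "g i = 3*i + (SOME d. d < 3 \<and> ?G (3*i + d))" for i
  have g: "g i div 3 = i \<and> ?G (g i) \<and> g i < 3*i + 3" for i
  proof -
    have "(SOME d. d < 3 \<and> ?G (3*i + d)) < 3 \<and> ?G (3*i + (SOME d. d < 3 \<and> ?G (3*i + d)))"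
      using someI_ex[OF ex[of i]] by blast
    then show ?thesis unfolding g_def by auto
  qed
  have inj: "inj_on g {..<L div 3}"
    by (rule inj_onI) (metis g)
  have "L div 3 = card (g ` {..<L div 3})" using inj by (simp add: card_image)
  also have "\<dots> \<le> card {t. t < L \<and> ?G t}"
  proof (rule card_mono)
    show "finite {t. t < L \<and> ?G t}" by simp
    show "g ` {..<L div 3} \<subseteq> {t. t < L \<and> ?G t}"
    proof
      fix y assume "y \<in> g ` {..<L div 3}"
      then obtain i where i: "i < L div 3" "y = g i" by auto
      have "g i < 3*i + 3" using g by blast
      also have "3*i + 3 \<le> L" using i by linarith
      finally show "y \<in> {t. t < L \<and> ?G t}" using g i by auto
    qed
  qed
  finally show ?thesis .
qed

lemma bad_count8: "x \<in> mstates n \<Longrightarrow> L \<le> 4*n \<Longrightarrow>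
   card {t. t < L \<and> endst n x (replicate t Cont) \<in> bad n} \<le> 8"
proof -
  assume x: "x \<in> mstates n" and L: "L \<le> 4*n"
  let ?B = "\<lambda>t. endst n x (replicate t Cont) \<in> bad n"
  have sub: "{t. t < L \<and> ?B t} \<subseteq> {t. t < min L (2*n) \<and> ?B t} \<union> (\<lambda>t. 2*n + t) ` {t. t < L - 2*n \<and> ?B t}"
  proof
    fix t assume t: "t \<in> {t. t < L \<and> ?B t}"
    show "t \<in> {t. t < min L (2*n) \<and> ?B t} \<union> (\<lambda>t. 2*n + t) ` {t. t < L - 2*n \<and> ?B t}"
    proof (cases "t < 2*n")
      case True then show ?thesis using t by auto
    next
      case False
      then have "t = 2*n + (t - 2*n)" by simp
      moreover have "?B (t - 2*n)" using t endst_rep_period[OF x, of "t - 2*n"] False by simp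
      moreover have "t - 2*n < L - 2*n" using t False by auto
      ultimately have "t \<in> (\<lambda>t. 2*n + t) ` {t. t < L - 2*n \<and> ?B t}"
        by (intro image_eqI[of _ _ "t - 2*n"]) auto
      then show ?thesis by blast
    qed
  qed
  have "card {t. t < L \<and> ?B t} \<le> card ({t. t < min L (2*n) \<and> ?B t} \<union> (\<lambda>t. 2*n + t) ` {t. t < L - 2*n \<and> ?B t})"
    by (rule card_mono[OF _ sub]) simp
  also have "\<dots> \<le> card {t. t < min L (2*n) \<and> ?B t} + card ((\<lambda>t. 2*n + t) ` {t. t < L - 2*n \<and> ?B t})"
    by (rule card_Un_le)
  also have "\<dots> \<le> 4 + 4"
  proof (rule add_mono)
    show "card {t. t < min L (2*n) \<and> ?B t} \<le> 4" by (rule bad_count[OF x]) simp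
    have "card ((\<lambda>t. 2*n + t) ` {t. t < L - 2*n \<and> ?B t}) \<le> card {t. t < L - 2*n \<and> ?B t}"
      by (rule card_image_le) simp
    also have "\<dots> \<le> 4" by (rule bad_count[OF x]) (use L in simp)
    finally show "card ((\<lambda>t. 2*n + t) ` {t. t < L - 2*n \<and> ?B t}) \<le> 4" .
  qed
  finally show ?thesis by simp
qed

lemma filt_rep: "filter (\<lambda>(s,e). e = Switch) (mtrans n s (replicate p Cont @ r)) =
   filter (\<lambda>(s,e). e = Switch) (mtrans n (endst n s (replicate p Cont)) r)"
  by (induction p arbitrary: s) auto




lemma mweight_nonneg: "U \<ge> 1 \<Longrightarrow> mweight U es \<ge> 0"
  unfolding mweight_def
  by (rule prod_list_nonneg) (auto simp: medge_prob_def split: medge.splits)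

lemma main_bound:
  fixes n U k :: nat and a j :: mstate
  assumes n3: "n \<ge> 3" and U3: "U \<ge> 3" and a: "a \<in> mstates n" and j: "j \<in> mstates n"
    and k: "k \<le> 2*n - 2"
  shows "mcond_prob U (4*n-1) (eventT n a j) (eventL k) \<ge> (1/4^12) * (1 - 1/real U)^(4*n) / real U"
proof -
  define p where "p = (posn n j + 2*n - posn n a) mod (2*n)"
  have p2: "p < 2*n" using n3 by (simp add: p_def)
  have pj: "endst n a (replicate p Cont) = j"
  proof -
    have pa: "posn n a < 2*n" and pjl: "posn n j < 2*n" using posn_lt a j by auto
    have "posn n (endst n a (replicate p Cont)) = (posn n a + p) mod (2*n)" using endst_rep[OF a] by blast
    also have "\<dots> = (posn n a + (posn n j + 2*n - posn n a)) mod (2*n)" unfolding p_def by (simp add: mod_add_right_eq)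
    also have "posn n a + (posn n j + 2*n - posn n a) = posn n j + 2*n" using pa by simp
    also have "(posn n j + 2*n) mod (2*n) = posn n j" using pjl by simp
    finally show ?thesis using endst_rep[OF a, of p] j inj_onD[OF posn_inj] by metis
  qed
  define N where "N = 4*n - k"
  have N1: "N \<ge> 2*n + 2" using k n3 by (simp add: N_def)
  define q where "q = N - 2 - p"
  have Npq: "N = p + q + 2" using N1 p2 by (simp add: q_def)
  have q4: "q + 1 \<le> 4*n" using Npq N_def by simp
  define b where "b = mstep n j Switch"
  have b: "b \<in> mstates n" using switch_step[OF j] b_def by simp
  define w where "w = replicate p Cont @ Switch # replicate q Cont"
  have lw: "length w = p + q + 1" by (simp add: w_def)
  have nm: "Major \<notin> set w" by (simp add: w_def)
  define sl where "sl t = endst n a (take t w)" for t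
  have sl1: "sl t = endst n a (replicate t Cont)" if "t < p+1" for t
    using that by (simp add: sl_def w_def take_append min_def)
  have sl2: "sl (p+1+t) = endst n b (replicate t Cont)" if "t < q+1" for t
  proof -
    have "take (p+1+t) w = replicate p Cont @ Switch # replicate t Cont"
      using that by (simp add: w_def take_append min_def)
    then show ?thesis by (simp add: sl_def endst_append pj b_def)
  qed
  have split: "card {t. t < N \<and> P (sl t)} = card {t. t < p+1 \<and> P (endst n a (replicate t Cont))}
      + card {t. t < q+1 \<and> P (endst n b (replicate t Cont))}" for P
  proof -
    have eq: "{t. t < N \<and> P (sl t)} = {t. t < p+1 \<and> P (endst n a (replicate t Cont))} \<union>
       (\<lambda>t. p+1+t) ` {t. t < q+1 \<and> P (endst n b (replicate t Cont))}"
    proof (rule set_eqI, rule iffI)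
      fix t assume t: "t \<in> {t. t < N \<and> P (sl t)}"
      show "t \<in> {t. t < p+1 \<and> P (endst n a (replicate t Cont))} \<union>
       (\<lambda>t. p+1+t) ` {t. t < q+1 \<and> P (endst n b (replicate t Cont))}"
      proof (cases "t < p+1")
        case True then show ?thesis using t sl1 by auto
      next
        case False
        then have "t = p+1+(t-(p+1))" "t-(p+1) < q+1" using t Npq by auto
        then show ?thesis using t sl2[of "t-(p+1)"]
          by (intro UnI2 image_eqI[of _ _ "t-(p+1)"]) auto
      qed
    next
      fix t assume "t \<in> {t. t < p+1 \<and> P (endst n a (replicate t Cont))} \<union>
       (\<lambda>t. p+1+t) ` {t. t < q+1 \<and> P (endst n b (replicate t Cont))}"
      then show "t \<in> {t. t < N \<and> P (sl t)}" using sl1 sl2 Npq by auto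
    qed
    have "card ({t. t < p+1 \<and> P (endst n a (replicate t Cont))} \<union>
       (\<lambda>t. p+1+t) ` {t. t < q+1 \<and> P (endst n b (replicate t Cont))}) =
      card {t. t < p+1 \<and> P (endst n a (replicate t Cont))} +
      card ((\<lambda>t. p+1+t) ` {t. t < q+1 \<and> P (endst n b (replicate t Cont))})"
      by (rule card_Un_disjoint) auto
    also have "card ((\<lambda>t. p+1+t) ` {t. t < q+1 \<and> P (endst n b (replicate t Cont))}) =
       card {t. t < q+1 \<and> P (endst n b (replicate t Cont))}"
      by (rule card_image) (auto simp: inj_on_def)
    finally show ?thesis using eq by simp
  qed
  define A where "A = card {t. t < N \<and> sl t \<notin> bad n}"
  have AB: "A + card {t. t < N \<and> sl t \<in> bad n} = N"
  proof -
    have "card ({t. t < N \<and> sl t \<notin> bad n} \<union> {t. t < N \<and> sl t \<in> bad n}) =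
       card {t. t < N \<and> sl t \<notin> bad n} + card {t. t < N \<and> sl t \<in> bad n}"
      by (rule card_Un_disjoint) auto
    moreover have "{t. t < N \<and> sl t \<notin> bad n} \<union> {t. t < N \<and> sl t \<in> bad n} = {..<N}" by auto
    ultimately show ?thesis by (simp add: A_def)
  qed
  have B12: "card {t. t < N \<and> sl t \<in> bad n} \<le> 12"
    using split[of "\<lambda>x. x \<in> bad n"] bad_count[OF a, of "p+1"] bad_count8[OF b q4] p2 by simp
  have A3: "N \<le> 3*A + 4"
    using split[of "\<lambda>x. x \<notin> bad n"] good_count[OF a n3, of "p+1"] good_count[OF b n3, of "q+1"] Npq
    unfolding A_def by linarith
  have A1: "A \<ge> 1" and kA: "k \<le> 3*A" using A3 N1 k n3 by linarith+
  define bs where "bs = map (\<lambda>t. sl t \<notin> bad n) [0..<N]"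
  have cntA: "length (filter (\<lambda>x. x) bs) = A"
    unfolding length_filter_conv_card A_def bs_def by (rule arg_cong[where f=card]) auto
  have cardC: "card (comps bs k) = (k + A - 1) choose k"
    using comps_card[of bs k] cntA A1 by simp
  have C_le: "(4*n - 1 choose k) \<le> 4^12 * card (comps bs k)"
  proof -
    have e: "4*n - 1 = k + A - 1 + (N - A)" using AB A1 N_def k n3 by simp
    have "(4*n - 1 choose k) \<le> 4^(N-A) * ((k + A - 1) choose k)"
      unfolding e by (rule choose_ratio[OF A1 kA])
    also have "\<dots> \<le> 4^12 * ((k + A - 1) choose k)"
      using AB B12 by (intro mult_right_mono power_increasing) auto
    finally show ?thesis using cardC by simp
  qed
  have U1: "real U \<ge> 3" using U3 by simp
  have memb: "build w cs \<in> {es. length es = 4*n-1 \<and> eventT n a j es \<and> eventL k es}"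
    if cs: "cs \<in> comps bs k" for cs
  proof -
    have lc: "length cs = Suc (length w)" and sc: "sum_list cs = k"
      and la: "list_all2 (\<lambda>c b. c > 0 \<longrightarrow> b) cs bs"
      using cs lw Npq by (auto simp: comps_def bs_def)
    have len: "length (build w cs) = 4*n-1" using build_length[OF lc] sc lw Npq N_def k n3 by simp
    have L: "eventL k (build w cs)" using build_major[OF lc nm] sc by (simp add: eventL_def)
    have maj: "s \<notin> {(1, False), (1, True), (n, False), (n, True)}"
      if ms: "(s, Major) \<in> set (mtrans n a (build w cs))" for s
    proof -
      obtain t where t: "t < length cs" "cs!t > 0" "s = endst n a (take t w)"
        using build_majors[OF lc ms nm] by blast
      have "bs!t" using la t list_all2_nthD by blast
      moreover have "t < N" using t lc lw Npq by simp
      ultimately have "sl t \<notin> bad n" by (simp add: bs_def)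
      then show ?thesis using t by (simp add: sl_def bad_def)
    qed
    have sw: "filter (\<lambda>(s, e). e = Switch) (mtrans n a (build w cs)) = [(j, Switch)]"
    proof -
      have "filter (\<lambda>(s, e). e = Switch) (mtrans n a (build w cs)) =
          filter (\<lambda>(s, e). e = Switch) (mtrans n a w)" by (rule build_switch[OF lc])
      also have "\<dots> = filter (\<lambda>(s, e). e = Switch) (mtrans n j (Switch # replicate q Cont))"
        unfolding w_def filt_rep pj ..
      also have "\<dots> = (j, Switch) # filter (\<lambda>(s, e). e = Switch) (mtrans n b (replicate q Cont))"
        by (simp add: b_def)
      also have "filter (\<lambda>(s, e). e = Switch) (mtrans n b (replicate q Cont)) = []"
        using filt_rep[of n b q "[]"] by simp
      finally show ?thesis .
    qed
    have T: "eventT n a j (build w cs)"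
      unfolding eventT_def using maj sw by auto
    show ?thesis using len L T by simp
  qed
  have inj: "inj_on (build w) (comps bs k)"
  proof (rule inj_onI)
    fix x y assume "x \<in> comps bs k" "y \<in> comps bs k" "build w x = build w y"
    then show "x = y" using build_inj[of x w y] nm lw Npq by (auto simp: comps_def bs_def)
  qed
  have wt: "mweight U (build w cs) = (1/2)^k * mweight U w" if "cs \<in> comps bs k" for cs
    using build_weight[of cs w U] that lw Npq by (auto simp: comps_def bs_def)
  have mw: "mweight U w = ((1 - 1/real U)/2)^(p+q) * (1/(2*real U))"
    by (simp add: mweight_def w_def medge_prob_def power_add)
  define K where "K = real (card (comps bs k))"
  define C where "C = real (4*n - 1 choose k)"
  define r where "r = 1 - 1/real U"
  have r0: "0 \<le> r" "r \<le> 1" using U1 by (auto simp: r_def)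
  have Cpos: "C > 0" using k n3 by (simp add: C_def)
  have KC: "K \<ge> C / 4^12" using C_le unfolding K_def C_def by (simp add: field_simps)
  have X: "mprob U (4*n-1) (\<lambda>es. eventT n a j es \<and> eventL k es) \<ge> K * ((1/2)^k * mweight U w)"
  proof -
    have "K * ((1/2)^k * mweight U w) = (\<Sum>cs\<in>comps bs k. mweight U (build w cs))"
      using wt by (simp add: K_def)
    also have "\<dots> = (\<Sum>es\<in>build w ` comps bs k. mweight U es)"
      using sum.reindex[OF inj, of "mweight U"] by (simp add: comp_def)
    also have "\<dots> \<le> (\<Sum>es\<in>{es. length es = 4*n-1 \<and> eventT n a j es \<and> eventL k es}. mweight U es)"
      by (rule sum_mono2) (use memb finite_ev mweight_nonneg U3 in auto)
    finally show ?thesis by (simp add: mprob_def)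
  qed
  have m: "4*n - 1 = k + (p+q) + 1" using Npq N_def k n3 by simp
  have X2: "K * ((1/2)^k * mweight U w) = K * r^(p+q) / (real U * 2^(4*n-1))"
    unfolding mw m r_def by (simp add: power_add field_simps power_divide)
  have Y: "mprob U (4*n-1) (eventL k) = C / 2^(4*n-1)" by (simp add: mprob_L C_def)
  have "mcond_prob U (4*n-1) (eventT n a j) (eventL k) \<ge> (K * r^(p+q) / (real U * 2^(4*n-1))) / (C / 2^(4*n-1))"
    unfolding mcond_prob_def Y using X X2 Cpos by (intro divide_right_mono) auto
  moreover have "(K * r^(p+q) / (real U * 2^(4*n-1))) / (C / 2^(4*n-1)) = K * r^(p+q) / (real U * C)"
    using Cpos by (simp add: field_simps)
  moreover have "K * r^(p+q) / (real U * C) \<ge> (C / 4^12) * r^(4*n) / (real U * C)"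
  proof (rule divide_right_mono)
    have "r^(4*n) \<le> r^(p+q)" using r0 Npq N_def by (intro power_decreasing) auto
    then show "(C / 4^12) * r^(4*n) \<le> K * r^(p+q)" using KC r0 Cpos by (intro mult_mono) auto
  qed (use Cpos U1 in simp)
  moreover have "(C / 4^12) * r^(4*n) / (real U * C) = (1/4^12) * r^(4*n) / real U"
    using Cpos by (simp add: field_simps)
  ultimately show ?thesis unfolding r_def by simp
qed




lemma pow_bound:
  fixes c :: real and n U :: nat
  assumes U3: "U \<ge> 3" and nc: "real n \<le> c * real U" and c0: "c \<ge> 0"
  shows "(1 - 1/real U)^(4*n) \<ge> exp (-7*c)"
proof -
  define x where "x = 1/real U"
  have x0: "0 \<le> x" "x \<le> 1/3" using U3 by (auto simp: x_def field_simps)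
  have rpos: "0 < 1 - x" using x0 by simp
  have l: "ln (1 - x) \<ge> -(5/3)*x"
  proof -
    have "- x - 2 * x\<^sup>2 \<le> ln (1 - x)" by (rule ln_one_minus_pos_lower_bound) (use x0 in auto)
    moreover have "2 * x\<^sup>2 \<le> (2/3) * x"
    proof -
      have "x * (3*x) \<le> x * 1" by (rule mult_left_mono) (use x0 in auto)
      then show ?thesis by (simp add: power2_eq_square)
    qed
    ultimately show ?thesis by simp
  qed
  have nx: "real n * x \<le> c" using nc U3 by (simp add: x_def field_simps)
  have "(1 - x)^(4*n) = exp (real (4*n) * ln (1 - x))"
  proof -
    have "exp (ln ((1-x)^(4*n))) = (1-x)^(4*n)" using rpos by simp
    moreover have "ln ((1-x)^(4*n)) = real (4*n) * ln (1-x)" by (rule ln_realpow)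
    ultimately show ?thesis by simp
  qed
  also have "real (4*n) * ln (1 - x) \<ge> -7*c"
  proof -
    have "real (4*n) * ln (1 - x) \<ge> real (4*n) * (-(5/3)*x)" by (rule mult_left_mono[OF l]) simp
    moreover have "real (4*n) * (-(5/3)*x) = -(20/3) * (real n * x)" by simp
    moreover have "-(20/3) * (real n * x) \<ge> -(20/3) * c" using nx by linarith
    ultimately show ?thesis using c0 by linarith
  qed
  then have "exp (real (4*n) * ln (1 - x)) \<ge> exp (-7*c)" by simp
  finally show ?thesis by (simp add: x_def)
qed

theorem lemma9:
  fixes c :: real
  assumes "c \<ge> 1"
  shows "\<exists>c'::real. c' > 0 \<and>
    (\<forall>n U :: nat. n \<ge> 3 \<longrightarrow> U \<ge> 3 \<longrightarrow> real n / c \<le> real U \<longrightarrow> real U \<le> c * real n \<longrightarrow>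
      (\<forall>a \<in> mstates n. \<forall>j \<in> mstates n. \<forall>k::nat. k \<le> 2 * n - 2 \<longrightarrow>
         mcond_prob U (4 * n - 1) (eventT n a j) (eventL k) \<ge> 1 / (c' * real n)))"
proof (intro exI[of _ "4^12 * c * exp (7*c)"] conjI allI impI ballI)
  show "0 < 4^12 * c * exp (7*c)" using assms by simp
next
  fix n U :: nat and a j k
  assume n3: "n \<ge> 3" and U3: "U \<ge> 3" and l: "real n / c \<le> real U" and u: "real U \<le> c * real n"
    and a: "a \<in> mstates n" and j: "j \<in> mstates n" and k: "k \<le> 2 * n - 2"
  have nc: "real n \<le> c * real U" using l assms by (simp add: field_simps)
  have P: "(1 - 1/real U)^(4*n) \<ge> exp (-7*c)" by (rule pow_bound[OF U3 nc]) (use assms in simp)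
  have Upos: "real U > 0" using U3 by simp
  have gen: "1 / (K * c * e * m) = (1/K) * (1/e) / (c * m)" for K e m :: real
    by simp
  have "1 / (4^12 * c * exp (7*c) * real n) = (1/4^12) * exp (-7*c) / (c * real n)"
  proof -
    have e: "exp (-7*c) = 1/exp(7*c)" using exp_minus'[of "7*c"] by simp
    show ?thesis unfolding gen e ..
  qed
  also have "\<dots> \<le> (1/4^12) * (1 - 1/real U)^(4*n) / real U"
  proof (rule frac_le)
    show "0 \<le> (1/4^12) * (1 - 1/real U)^(4*n)" using U3 by simp
    show "(1/4^12) * exp (-7*c) \<le> (1/4^12) * (1 - 1/real U)^(4*n)" using P by simp
    show "0 < real U" by (rule Upos)
    show "real U \<le> c * real n" by (rule u)
  qed
  also have "\<dots> \<le> mcond_prob U (4*n-1) (eventT n a j) (eventL k)"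
    by (rule main_bound[OF n3 U3 a j k])
  finally show "1 / (4^12 * c * exp (7*c) * real n) \<le> mcond_prob U (4 * n - 1) (eventT n a j) (eventL k)" .
qed


end
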